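(* Let $c\in(0,1)$ and $C\ge1$ be constants such that for all $n\ge1$, all integers $0\le w\le cn$ and all integers $0\le i\le n/2$, $|K^{(n)}_w(i)|\le C\binom nw(1-\frac{2w}{n})^i$. Let $R\in(0,1)$, $\omega\in(0,c)$ and $\partial^\perp>0$. Let $(\mathcal{C}_j)_{j\ge1}$ be a sequence of binary linear $[n_j,k_j]$ codes with $n_j\to\infty$, $k_j/n_j\to R$, and $d(\mathcal{C}_j^\perp)/n_j\to\partial^\perp$, where $d(\mathcal{C}_j^\perp)$ is the minimum distance of the dual code; let $G_j$ be a generator matrix of $\mathcal{C}_j$. Let $(Z_j)_{j\ge1}$ be any sequence of random vectors, $Z_j$ on $\mathbb{F}_2^{n_j}$. Then there exists a sequence of vectors $e_j\in\mathbb{F}_2^{n_j}$ with $|e_j|/n_j\to\omega$ such that: (i) if $d_{TV}(P_{G_jZ_j},P_{U_{k_j}})=\mathrm{negl}(k_j)$, then $|\mathrm{bias}(e_j^\intercal Z_j)|=\mathrm{negl}(k_j)$; (ii) if $d_{TV}(P_{G_jZ_j},P_{U_{k_j}})=2^{-\Omega(k_j)}$, then $|\mathrm{bias}(e_j^\intercal Z_j)|=2^{-\Omega(k_j)}$.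
   Context: Krawtchouk polynomial: $K^{(n)}_w(i)=\sum_{j=0}^w(-1)^j\binom ij\binom{n-i}{w-j}$. For a $\{0,1\}$-valued random variable $\xi$, $\mathrm{bias}(\xi)=\frac12-\Pr(\xi=1)$. $P_{U_k}$ is uniform on $\mathbb{F}_2^k$; $d_{TV}(P,Q)=\frac12\sum_x|P(x)-Q(x)|$. A function $f$ is negligible, $f(k)=\mathrm{negl}(k)$, if $f(k)=o(k^{-a})$ for every $a>0$ as $k\to\infty$. $f(k)=2^{-\Omega(k)}$ means there is $\beta>0$ with $f(k)\le 2^{-\beta k}$ for all sufficiently large $k$. *)

theory Defs
  imports "HOL-Probability.Probability" "HOL-Library.Landau_Symbols"
begin

text \<open>Vectors of F_2^n are represented by their supports: subsets of {..<n}.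
  Addition is symmetric difference, the Hamming weight is the cardinality,
  and the standard inner product x.y is the parity of card (x \<inter> y)
  (True = 1).\<close>

definition vecs :: "nat \<Rightarrow> nat set set" where
  "vecs n = Pow {..<n}"

definition dot :: "nat set \<Rightarrow> nat set \<Rightarrow> bool" where
  "dot x y = odd (card (x \<inter> y))"

definition krawtchouk :: "nat \<Rightarrow> nat \<Rightarrow> nat \<Rightarrow> int" where
  "krawtchouk n w i = (\<Sum>j=0..w. (-1)^j * int (i choose j) * int ((n - i) choose (w - j)))"

text \<open>A k x n generator matrix over F_2 is given by its rows G 0, ..., G (k-1),
  each a vector of F_2^n.  The message m (a vector of F_2^k) is encoded as
  m^T G.\<close>
definition encode :: "nat \<Rightarrow> (nat \<Rightarrow> nat set) \<Rightarrow> nat set \<Rightarrow> nat set" where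
  "encode n G m = {i. i < n \<and> odd (card {r \<in> m. i \<in> G r})}"

definition is_gen_matrix :: "nat \<Rightarrow> nat \<Rightarrow> (nat \<Rightarrow> nat set) \<Rightarrow> bool" where
  "is_gen_matrix n k G \<longleftrightarrow> (\<forall>r<k. G r \<in> vecs n) \<and> inj_on (encode n G) (vecs k)"

definition lin_code :: "nat \<Rightarrow> nat \<Rightarrow> (nat \<Rightarrow> nat set) \<Rightarrow> nat set set" where
  "lin_code n k G = encode n G ` vecs k"

definition dual_code :: "nat \<Rightarrow> nat set set \<Rightarrow> nat set set" where
  "dual_code n C = {x \<in> vecs n. \<forall>c\<in>C. \<not> dot x c}"

text \<open>Minimum distance of a linear code = minimum weight of a nonzero codeword.\<close>
definition min_dist :: "nat set set \<Rightarrow> nat" where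
  "min_dist C = Inf {card x | x. x \<in> C \<and> x \<noteq> {}}"

definition mat_vec :: "nat \<Rightarrow> (nat \<Rightarrow> nat set) \<Rightarrow> nat set \<Rightarrow> nat set" where
  "mat_vec k G z = {r. r < k \<and> dot (G r) z}"

definition tv_dist :: "'a set \<Rightarrow> 'a pmf \<Rightarrow> 'a pmf \<Rightarrow> real" where
  "tv_dist S P Q = (1/2) * (\<Sum>x\<in>S. \<bar>pmf P x - pmf Q x\<bar>)"

definition uniform_vec :: "nat \<Rightarrow> nat set pmf" where
  "uniform_vec k = pmf_of_set (vecs k)"

definition bias_lin :: "nat set \<Rightarrow> nat set pmf \<Rightarrow> real" where
  "bias_lin e Z = 1/2 - measure_pmf.prob Z {z. dot e z}"

definition negl :: "(nat \<Rightarrow> nat) \<Rightarrow> (nat \<Rightarrow> real) \<Rightarrow> bool" where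
  "negl k f \<longleftrightarrow> (\<forall>a>0. f \<in> o(\<lambda>j. real (k j) powr (-a)))"

definition exp_small :: "(nat \<Rightarrow> nat) \<Rightarrow> (nat \<Rightarrow> real) \<Rightarrow> bool" where
  "exp_small k f \<longleftrightarrow> (\<exists>\<beta>>0. eventually (\<lambda>j. f j \<le> 2 powr (- \<beta> * real (k j))) sequentially)"

end

theory Submission
  imports Defs "HOL-Real_Asymp.Real_Asymp"
begin


definition sd :: "nat set \<Rightarrow> nat set \<Rightarrow> nat set" where
  "sd a b = (a - b) \<union> (b - a)"

definition chi :: "nat set \<Rightarrow> nat set \<Rightarrow> real" where
  "chi e z = (-1) ^ card (e \<inter> z)"

lemma card_sd: assumes "finite a" "finite b"
  shows "card a + card b = card (sd a b) + 2 * card (a \<inter> b)"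
proof -
  have "sd a b = (a \<union> b) - (a \<inter> b)" unfolding sd_def by auto
  hence "card (sd a b) = card (a \<union> b) - card (a \<inter> b)"
    using assms card_Diff_subset[of "a \<inter> b" "a \<union> b"] by auto
  moreover have "card (a \<inter> b) \<le> card (a \<union> b)" using assms by (intro card_mono) auto
  moreover have "card a + card b = card (a \<union> b) + card (a \<inter> b)" using assms card_Un_Int by blast
  ultimately show ?thesis by simp
qed

lemma card_sd_le: assumes "finite a" "finite b" shows "card (sd a b) \<le> card a + card b"
  using card_sd[OF assms] by simp

lemma sd_Int: "e \<inter> sd z z' = sd (e \<inter> z) (e \<inter> z')" unfolding sd_def by auto

lemma chi_mult: assumes "finite e" shows "chi e z * chi e z' = chi e (sd z z')"
proof -
  have "card (e \<inter> z) + card (e \<inter> z') = card (e \<inter> sd z z') + 2 * card (e \<inter> z \<inter> z')"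
    using card_sd[of "e \<inter> z" "e \<inter> z'"] assms unfolding sd_Int
    by (simp add: Int_assoc Int_left_commute Int_commute inf.left_idem)
  hence "(-1::real) ^ (card (e \<inter> z) + card (e \<inter> z')) = (-1) ^ card (e \<inter> sd z z')"
    by (simp add: power_add power_mult)
  thus ?thesis unfolding chi_def by (simp add: power_add)
qed

lemma dot_sd: assumes "finite a" shows "dot a (sd b c) \<longleftrightarrow> dot a b \<noteq> dot a c"
proof -
  have "card (a \<inter> b) + card (a \<inter> c) = card (a \<inter> sd b c) + 2 * card (a \<inter> b \<inter> c)"
    using card_sd[of "a \<inter> b" "a \<inter> c"] assms unfolding sd_Int
    by (simp add: Int_assoc Int_left_commute Int_commute inf.left_idem)
  thus ?thesis unfolding dot_def by presburger
qed

lemma dot_comm: "dot a b = dot b a" unfolding dot_def by (simp add: Int_commute)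

lemma encode_insert: assumes "finite m" "r \<notin> m"
  shows "encode n G (insert r m) = sd (encode n G m) (G r \<inter> {..<n})"
proof -
  have "\<And>i. card {r' \<in> insert r m. i \<in> G r'} = card {r' \<in> m. i \<in> G r'} + (if i \<in> G r then 1 else 0)"
  proof -
    fix i
    have "{r' \<in> insert r m. i \<in> G r'} = (if i \<in> G r then insert r {r' \<in> m. i \<in> G r'} else {r' \<in> m. i \<in> G r'})"
      by auto
    thus "?thesis i" using assms by auto
  qed
  thus ?thesis unfolding encode_def sd_def by auto
qed

lemma dot_encode: assumes "finite m" "finite y" "y \<subseteq> {..<n}"
  shows "dot y (encode n G m) \<longleftrightarrow> odd (card {r \<in> m. dot y (G r)})"
  using assms(1)
proof (induction m rule: finite_induct)
  case empty
  then show ?case by (simp add: encode_def dot_def)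
next
  case (insert r m)
  have e: "{r' \<in> insert r m. dot y (G r')} = (if dot y (G r) then insert r {r' \<in> m. dot y (G r')} else {r' \<in> m. dot y (G r')})"
    by auto
  have yy: "dot y (G r \<inter> {..<n}) \<longleftrightarrow> dot y (G r)" 
    using assms(3) unfolding dot_def by (metis inf.absorb_iff1 inf_assoc inf_commute)
  show ?case
    unfolding encode_insert[OF insert(1,2)] dot_sd[OF assms(2)] insert(3) e yy
    using insert(1,2) by auto
qed



lemma ker_dist:
  assumes rows: "\<forall>r<k. G r \<in> vecs n" and ab: "a \<in> vecs n" "b \<in> vecs n"
    and eq: "mat_vec k G a = mat_vec k G b" and ne: "a \<noteq> b"
  shows "min_dist (dual_code n (lin_code n k G)) \<le> card (sd a b)"
proof -
  have fin: "finite (sd a b)" "sd a b \<subseteq> {..<n}" using ab unfolding vecs_def sd_def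
    by (auto intro: finite_subset)
  have "sd a b \<in> dual_code n (lin_code n k G)"
    unfolding dual_code_def
  proof (intro CollectI conjI ballI)
    show "sd a b \<in> vecs n" using fin unfolding vecs_def by auto
    fix c assume "c \<in> lin_code n k G"
    then obtain m where m: "m \<in> vecs k" "c = encode n G m" unfolding lin_code_def by auto
    have fm: "finite m" using m(1) unfolding vecs_def by (auto intro: finite_subset)
    have emp: "{r \<in> m. dot (sd a b) (G r)} = {}"
    proof -
      { fix r assume r: "r \<in> m"
        hence rk: "r < k" using m(1) unfolding vecs_def by auto
        have "dot (G r) a = dot (G r) b" using eq rk unfolding mat_vec_def by blast
        moreover have "finite (G r)" using rows rk unfolding vecs_def by (auto intro: finite_subset)
        ultimately have "\<not> dot (sd a b) (G r)" using dot_sd dot_comm by metis }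
      thus ?thesis by auto
    qed
    show "\<not> dot (sd a b) c" unfolding m(2) dot_encode[OF fm fin(1) fin(2)] emp by simp
  qed
  moreover have "sd a b \<noteq> {}" using ne unfolding sd_def by auto
  ultimately show ?thesis unfolding min_dist_def
    by (intro cInf_lower) (auto intro: bdd_belowI[of _ 0])
qed

lemma card_layer:
  assumes x: "x \<subseteq> U" "finite U" and j: "j \<le> w"
  shows "card {e. e \<subseteq> U \<and> card e = w \<and> card (e \<inter> x) = j} = (card x choose j) * ((card U - card x) choose (w - j))"
proof -
  have fx: "finite x" using x finite_subset by blast
  let ?S = "{e. e \<subseteq> U \<and> card e = w \<and> card (e \<inter> x) = j}"
  let ?T = "{A. A \<subseteq> x \<and> card A = j} \<times> {B. B \<subseteq> U - x \<and> card B = w - j}"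
  have "bij_betw (\<lambda>e. (e \<inter> x, e - x)) ?S ?T"
  proof (rule bij_betw_byWitness[where f' = "\<lambda>(A,B). A \<union> B"])
    show "\<forall>a\<in>?S. (case (a \<inter> x, a - x) of (A, B) \<Rightarrow> A \<union> B) = a" by auto
    show "\<forall>a'\<in>?T. ((case a' of (A, B) \<Rightarrow> A \<union> B) \<inter> x, (case a' of (A, B) \<Rightarrow> A \<union> B) - x) = a'"
      by auto
    show "(\<lambda>e. (e \<inter> x, e - x)) ` ?S \<subseteq> ?T"
    proof (rule image_subsetI)
      fix e assume "e \<in> ?S"
      hence e: "e \<subseteq> U" "j = card (e \<inter> x)" "w = card e" by auto
      have "finite e" using e x finite_subset by blast
      hence "card (e - x) = card e - card (e \<inter> x)" by (metis card_Diff_subset_Int finite_Int Diff_Int2 inf.idem Diff_Int_distrib2)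
      thus "(e \<inter> x, e - x) \<in> ?T" using e by auto
    qed
    show "(\<lambda>(A, B). A \<union> B) ` ?T \<subseteq> ?S"
    proof (rule image_subsetI)
      fix p assume "p \<in> ?T"
      then obtain A B where p: "p = (A, B)" and A: "A \<subseteq> x" "j = card A" and B: "B \<subseteq> U - x" "card B = w - j" by auto
      have fA: "finite A" "finite B" using A B fx x finite_subset by blast+
      have d: "A \<inter> B = {}" using A B by auto
      have "card (A \<union> B) = card A + card B" using card_Un_disjoint[OF fA d] .
      moreover have "(A \<union> B) \<inter> x = A" using A B by auto
      ultimately show "(case p of (A, B) \<Rightarrow> A \<union> B) \<in> ?S"
        using A B j x p by auto
    qed
  qed
  hence "card ?S = card ?T" by (rule bij_betw_same_card)
  also have "\<dots> = (card x choose j) * (card (U - x) choose (w - j))"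
    using fx x by (simp add: card_cartesian_product n_subsets)
  also have "card (U - x) = card U - card x" using x fx by (simp add: card_Diff_subset)
  finally show ?thesis .
qed

lemma sum_chi_kraw:
  assumes x: "x \<subseteq> {..<n}"
  shows "(\<Sum>e\<in>{e\<in>vecs n. card e = w}. chi e x) = real_of_int (krawtchouk n w (card x))"
proof -
  let ?S = "{e\<in>vecs n. card e = w}"
  have fS: "finite ?S" unfolding vecs_def by auto
  have "(\<Sum>e\<in>?S. chi e x) = (\<Sum>e\<in>?S. (-1::real) ^ card (e \<inter> x))" unfolding chi_def ..
  also have "\<dots> = (\<Sum>j\<in>{0..w}. (\<Sum>e\<in>{e \<in> ?S. card (e \<inter> x) = j}. (-1::real) ^ card (e \<inter> x)))"
  proof (rule sum.group[symmetric, OF fS])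
    show "finite {0..w}" by simp
    show "(\<lambda>e. card (e \<inter> x)) ` ?S \<subseteq> {0..w}"
    proof
      fix y assume "y \<in> (\<lambda>e. card (e \<inter> x)) ` ?S"
      then obtain e where e: "e \<in> ?S" "y = card (e \<inter> x)" by auto
      have "finite e" using e(1) unfolding vecs_def by (auto intro: finite_subset)
      hence "card (e \<inter> x) \<le> card e" by (intro card_mono) auto
      thus "y \<in> {0..w}" using e by auto
    qed
  qed
  also have "\<dots> = (\<Sum>j\<in>{0..w}. (-1::real) ^ j * real ((card x choose j) * ((n - card x) choose (w - j))))"
  proof (rule sum.cong[OF refl])
    fix j assume j: "j \<in> {0..w}"
    have "(\<Sum>e\<in>{e \<in> ?S. card (e \<inter> x) = j}. (-1::real) ^ card (e \<inter> x)) = (\<Sum>e\<in>{e \<in> ?S. card (e \<inter> x) = j}. (-1::real) ^ j)"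
      by (rule sum.cong) auto
    also have "\<dots> = (-1) ^ j * real (card {e \<in> ?S. card (e \<inter> x) = j})" by simp
    also have "card {e \<in> ?S. card (e \<inter> x) = j} = (card x choose j) * ((n - card x) choose (w - j))"
    proof -
      have "{e \<in> ?S. card (e \<inter> x) = j} = {e. e \<subseteq> {..<n} \<and> card e = w \<and> card (e \<inter> x) = j}"
        unfolding vecs_def by auto
      thus ?thesis using card_layer[OF x _, of j w] j by auto
    qed
    finally show "(\<Sum>e\<in>{e \<in> ?S. card (e \<inter> x) = j}. (-1::real) ^ card (e \<inter> x)) = (-1::real) ^ j * real ((card x choose j) * ((n - card x) choose (w - j)))"
      by simp
  qed
  also have "\<dots> = real_of_int (krawtchouk n w (card x))"
    unfolding krawtchouk_def by (simp add: of_int_sum mult.assoc)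
  finally show ?thesis .
qed



lemma vecs_finite: "finite (vecs n)" unfolding vecs_def by simp
lemma vecs_elem_finite: "x \<in> vecs n \<Longrightarrow> finite x" unfolding vecs_def by (auto intro: finite_subset)
lemma card_vecs: "card (vecs n) = 2 ^ n" unfolding vecs_def by (simp add: card_Pow)
lemma vecs_card_le: "x \<in> vecs n \<Longrightarrow> card x \<le> n" unfolding vecs_def
  by (metis PowD card_lessThan card_mono finite_lessThan)

lemma Kbound:
  assumes kraw: "\<And>N w i. N \<ge> 1 \<Longrightarrow> real w \<le> c * real N \<Longrightarrow> real i \<le> real N / 2 \<Longrightarrow>
        \<bar>real_of_int (krawtchouk N w i)\<bar> \<le> Cst * real (N choose w) * (1 - 2 * real w / real N) ^ i"
    and n: "n \<ge> 1" and w: "real w \<le> c * real n" and x: "x \<in> vecs n"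
  shows "\<bar>\<Sum>e\<in>{e\<in>vecs n. card e = w}. chi e x\<bar> \<le> Cst * real (n choose w) * (1 - 2 * real w / real n) ^ (min (card x) (n - card x))"
proof (cases "2 * card x \<le> n")
  case True
  hence "min (card x) (n - card x) = card x" by auto
  moreover have "real (card x) \<le> real n / 2" using True by simp
  ultimately show ?thesis using kraw[OF n w] sum_chi_kraw[of x n w] x unfolding vecs_def by auto
next
  case False
  let ?y = "{..<n} - x"
  have xs: "x \<subseteq> {..<n}" using x unfolding vecs_def by auto
  have cy: "card ?y = n - card x" using xs by (simp add: card_Diff_subset finite_subset)
  have "min (card x) (n - card x) = card ?y" using False cy by auto
  moreover have "real (card ?y) \<le> real n / 2" using False cy by auto
  moreover have "(\<Sum>e\<in>{e\<in>vecs n. card e = w}. chi e x) = (-1)^w * (\<Sum>e\<in>{e\<in>vecs n. card e = w}. chi e ?y)"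
    unfolding sum_distrib_left
  proof (rule sum.cong[OF refl])
    fix e assume e: "e \<in> {e\<in>vecs n. card e = w}"
    have fe: "finite e" using e vecs_elem_finite by auto
    have "sd x ?y = {..<n}" using xs unfolding sd_def by auto
    hence "chi e x * chi e ?y = (-1)^w" using chi_mult[OF fe, of x ?y] e unfolding chi_def vecs_def
      by (simp add: Int_absorb2)
    moreover have "chi e ?y * chi e ?y = 1" unfolding chi_def by (simp add: power_mult_distrib[symmetric])
    ultimately show "chi e x = (-1)^w * chi e ?y" by (metis mult.assoc mult.right_neutral)
  qed
  ultimately show ?thesis using kraw[OF n w] sum_chi_kraw[of ?y n w] by (auto simp: abs_mult)
qed

lemma sum_binom_pow:
  fixes a b :: real
  shows "(\<Sum>x\<in>vecs n. a ^ card x * b ^ (n - card x)) = (a + b) ^ n"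
proof (induction n)
  case 0
  then show ?case by (simp add: vecs_def)
next
  case (Suc n)
  have V: "vecs (Suc n) = vecs n \<union> insert n ` vecs n" unfolding vecs_def lessThan_Suc Pow_insert ..
  have d: "vecs n \<inter> insert n ` vecs n = {}" unfolding vecs_def by auto
  have inj: "inj_on (insert n) (vecs n)" unfolding vecs_def inj_on_def
    by (metis Pow_iff insert_ident lessThan_iff order_less_irrefl subset_eq)
  have "(\<Sum>x\<in>vecs (Suc n). a ^ card x * b ^ (Suc n - card x))
     = (\<Sum>x\<in>vecs n. a ^ card x * b ^ (Suc n - card x)) + (\<Sum>x\<in>insert n ` vecs n. a ^ card x * b ^ (Suc n - card x))"
    unfolding V by (rule sum.union_disjoint) (auto simp: vecs_finite d)
  also have "(\<Sum>x\<in>vecs n. a ^ card x * b ^ (Suc n - card x)) = b * (\<Sum>x\<in>vecs n. a ^ card x * b ^ (n - card x))"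
    unfolding sum_distrib_left
  proof (rule sum.cong[OF refl])
    fix x assume "x \<in> vecs n" hence "card x \<le> n" by (rule vecs_card_le)
    hence "Suc n - card x = Suc (n - card x)" by simp
    thus "a ^ card x * b ^ (Suc n - card x) = b * (a ^ card x * b ^ (n - card x))" by simp
  qed
  also have "(\<Sum>x\<in>insert n ` vecs n. a ^ card x * b ^ (Suc n - card x)) = (\<Sum>x\<in>vecs n. a ^ card (insert n x) * b ^ (Suc n - card (insert n x)))"
    by (rule sum.reindex[OF inj, unfolded comp_def])
  also have "\<dots> = a * (\<Sum>x\<in>vecs n. a ^ card x * b ^ (n - card x))"
    unfolding sum_distrib_left
  proof (rule sum.cong[OF refl])
    fix x assume x: "x \<in> vecs n"
    have "n \<notin> x" "finite x" using x unfolding vecs_def by (auto intro: finite_subset)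
    thus "a ^ card (insert n x) * b ^ (Suc n - card (insert n x)) = a * (a ^ card x * b ^ (n - card x))" by simp
  qed
  finally show ?case using Suc by (simp add: algebra_simps)
qed

lemma count_lt:
  fixes lam t :: real and \<phi> :: "nat set \<Rightarrow> nat"
  assumes "finite V" "0 < lam" "lam \<le> 1"
  shows "real (card {x\<in>V. real (\<phi> x) < t}) \<le> lam powr (-t) * (\<Sum>x\<in>V. lam ^ \<phi> x)"
proof -
  have "real (card {x\<in>V. real (\<phi> x) < t}) = (\<Sum>x\<in>V. if real (\<phi> x) < t then 1 else 0)"
    using assms(1) by (simp add: sum.If_cases Int_def)
  also have "\<dots> \<le> (\<Sum>x\<in>V. lam powr (-t) * lam ^ \<phi> x)"
  proof (rule sum_mono)
    fix x assume "x \<in> V"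
    have eq: "lam powr (-t) * lam ^ \<phi> x = lam powr (real (\<phi> x) - t)"
      using assms by (simp add: powr_realpow[symmetric] powr_add[symmetric])
    have "0 \<le> lam powr (real (\<phi> x) - t)" by simp
    moreover have "real (\<phi> x) < t \<Longrightarrow> 1 \<le> lam powr (real (\<phi> x) - t)"
      using assms powr_mono'[of "real (\<phi> x) - t" 0 lam] by simp
    ultimately show "(if real (\<phi> x) < t then 1 else 0) \<le> lam powr (-t) * lam ^ \<phi> x" unfolding eq by auto
  qed
  finally show ?thesis by (simp add: sum_distrib_left)
qed



lemma chi_dot: "chi e z = 1 - 2 * (if dot e z then 1 else 0)"
  unfolding chi_def dot_def by (auto simp: neg_one_even_power neg_one_odd_power)

lemma prob_vecs:
  assumes "set_pmf P \<subseteq> vecs n"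
  shows "measure_pmf.prob P A = (\<Sum>z\<in>vecs n. if z \<in> A then pmf P z else 0)"
proof -
  have "measure_pmf.prob P A = measure_pmf.prob P (A \<inter> set_pmf P)" by (simp add: measure_Int_set_pmf)
  also have "A \<inter> set_pmf P = (A \<inter> vecs n) \<inter> set_pmf P" using assms by auto
  also have "measure_pmf.prob P \<dots> = measure_pmf.prob P (A \<inter> vecs n)" by (simp add: measure_Int_set_pmf)
  also have "\<dots> = sum (pmf P) (A \<inter> vecs n)" by (rule measure_measure_pmf_finite) (simp add: vecs_finite)
  also have "\<dots> = (\<Sum>z\<in>vecs n. if z \<in> A then pmf P z else 0)"
    by (simp add: sum.If_cases vecs_finite Int_commute)
  finally show ?thesis .
qed

lemma bias_eq:
  assumes "set_pmf P \<subseteq> vecs n"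
  shows "2 * bias_lin e P = (\<Sum>z\<in>vecs n. pmf P z * chi e z)"
proof -
  have s1: "(\<Sum>z\<in>vecs n. pmf P z) = 1" by (rule sum_pmf_eq_1[OF vecs_finite assms])
  have "(\<Sum>z\<in>vecs n. pmf P z * chi e z) = (\<Sum>z\<in>vecs n. pmf P z) - 2 * (\<Sum>z\<in>vecs n. if z \<in> {z. dot e z} then pmf P z else 0)"
  proof -
    have "\<And>z. pmf P z * chi e z = pmf P z - 2 * (if z \<in> {z. dot e z} then pmf P z else 0)"
      by (simp add: chi_dot)
    thus ?thesis by (simp add: sum_subtractf sum_distrib_left)
  qed
  thus ?thesis unfolding bias_lin_def prob_vecs[OF assms] s1 by simp
qed

lemma blockbound:
  fixes B V :: "nat set set" and h :: "nat set \<Rightarrow> nat set" and f Q :: "nat set \<Rightarrow> real"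
    and \<phi> :: "nat set \<Rightarrow> nat" and \<rho> t :: real
  assumes V: "finite V" "B \<subseteq> V" and inj: "inj_on h B" and hB: "h ` B \<subseteq> vecs k"
    and f: "\<And>x. x \<in> B \<Longrightarrow> 0 \<le> f x \<and> f x \<le> Q (h x)" and \<rho>: "0 < \<rho>" "\<rho> \<le> 1"
  shows "(\<Sum>x\<in>B. f x * \<rho> ^ \<phi> x) \<le> (1/2^k) * (2^k * \<rho> powr t + card {x\<in>V. real (\<phi> x) < t})
            + (\<Sum>s\<in>vecs k. \<bar>Q s - 1/2^k\<bar>)"
proof -
  let ?u = "1/2^k :: real"
  have fB: "finite B" using V finite_subset by blast
  have cB: "card B \<le> 2^k"
  proof -
    have "card B = card (h ` B)" using card_image[OF inj] by simp
    also have "\<dots> \<le> card (vecs k)" by (rule card_mono[OF vecs_finite hB])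
    finally show ?thesis by (simp add: card_vecs)
  qed
  have "(\<Sum>x\<in>B. f x * \<rho> ^ \<phi> x) \<le> (\<Sum>x\<in>B. ?u * \<rho> ^ \<phi> x + \<bar>Q (h x) - ?u\<bar>)"
  proof (rule sum_mono)
    fix x assume x: "x \<in> B"
    have p: "0 \<le> \<rho> ^ \<phi> x" "\<rho> ^ \<phi> x \<le> 1" using \<rho> by (auto simp: power_le_one)
    have "f x * \<rho> ^ \<phi> x \<le> Q (h x) * \<rho> ^ \<phi> x" using f[OF x] p by (intro mult_right_mono) auto
    also have "\<dots> \<le> (?u + \<bar>Q (h x) - ?u\<bar>) * \<rho> ^ \<phi> x" using p by (intro mult_right_mono) auto
    also have "\<dots> \<le> ?u * \<rho> ^ \<phi> x + \<bar>Q (h x) - ?u\<bar>" using p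
      by (simp add: distrib_right mult_left_le)
    finally show "f x * \<rho> ^ \<phi> x \<le> ?u * \<rho> ^ \<phi> x + \<bar>Q (h x) - ?u\<bar>" .
  qed
  also have "\<dots> = ?u * (\<Sum>x\<in>B. \<rho> ^ \<phi> x) + (\<Sum>x\<in>B. \<bar>Q (h x) - ?u\<bar>)"
    by (simp add: sum.distrib sum_distrib_left)
  also have "(\<Sum>x\<in>B. \<bar>Q (h x) - ?u\<bar>) \<le> (\<Sum>s\<in>vecs k. \<bar>Q s - ?u\<bar>)"
  proof -
    have "(\<Sum>x\<in>B. \<bar>Q (h x) - ?u\<bar>) = (\<Sum>s\<in>h ` B. \<bar>Q s - ?u\<bar>)" by (simp add: sum.reindex[OF inj])
    also have "\<dots> \<le> (\<Sum>s\<in>vecs k. \<bar>Q s - ?u\<bar>)" by (rule sum_mono2[OF vecs_finite hB]) auto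
    finally show ?thesis .
  qed
  finally have main: "(\<Sum>x\<in>B. f x * \<rho> ^ \<phi> x) \<le> ?u * (\<Sum>x\<in>B. \<rho> ^ \<phi> x) + (\<Sum>s\<in>vecs k. \<bar>Q s - ?u\<bar>)" by simp
  have S1: "(\<Sum>x\<in>B. \<rho> ^ \<phi> x) \<le> 2^k * \<rho> powr t + card {x\<in>V. real (\<phi> x) < t}"
  proof -
    have "(\<Sum>x\<in>B. \<rho> ^ \<phi> x) \<le> (\<Sum>x\<in>B. \<rho> powr t + (if real (\<phi> x) < t then 1 else 0))"
    proof (rule sum_mono)
      fix x assume "x \<in> B"
      show "\<rho> ^ \<phi> x \<le> \<rho> powr t + (if real (\<phi> x) < t then 1 else 0)"
      proof (cases "real (\<phi> x) < t")
        case True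
        then show ?thesis using \<rho> by (simp add: power_le_one add_increasing)
      next
        case False
        hence "\<rho> powr real (\<phi> x) \<le> \<rho> powr t" using \<rho> by (intro powr_mono') auto
        thus ?thesis using False \<rho> by (simp add: powr_realpow)
      qed
    qed
    also have "\<dots> = card B * \<rho> powr t + card {x\<in>B. real (\<phi> x) < t}"
      using fB by (simp add: sum.distrib sum.If_cases Int_def)
    also have "\<dots> \<le> 2^k * \<rho> powr t + card {x\<in>V. real (\<phi> x) < t}"
    proof (intro add_mono mult_right_mono)
      show "real (card B) \<le> 2 ^ k" using cB by (metis of_nat_le_iff of_nat_numeral of_nat_power)
      show "real (card {x \<in> B. real (\<phi> x) < t}) \<le> real (card {x \<in> V. real (\<phi> x) < t})"
        using V by (intro of_nat_mono card_mono) auto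
    qed simp
    finally show ?thesis .
  qed
  have "?u * (\<Sum>x\<in>B. \<rho> ^ \<phi> x) \<le> ?u * (2^k * \<rho> powr t + card {x\<in>V. real (\<phi> x) < t})"
    by (rule mult_left_mono[OF S1]) simp
  thus ?thesis using main by linarith
qed



lemma tv_eq:
  "tv_dist (vecs k) Q (uniform_vec k) = (1/2) * (\<Sum>s\<in>vecs k. \<bar>pmf Q s - 1/2^k\<bar>)"
proof -
  have ne: "vecs k \<noteq> {}" unfolding vecs_def by auto
  have "\<And>s. s \<in> vecs k \<Longrightarrow> pmf (uniform_vec k) s = 1/2^k"
    unfolding uniform_vec_def using pmf_of_set[OF ne vecs_finite] by (simp add: card_vecs)
  thus ?thesis unfolding tv_dist_def by (simp cong: sum.cong)
qed

lemma pmf_le_map: "pmf P y \<le> pmf (map_pmf f P) (f y)"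
proof -
  have "pmf P y = measure_pmf.prob P {y}" by (simp add: measure_pmf_single)
  also have "\<dots> \<le> measure_pmf.prob P (f -` {f y})" by (rule measure_pmf.finite_measure_mono) auto
  finally show ?thesis by (simp add: pmf_map)
qed

lemma sd_vecs: "a \<in> vecs n \<Longrightarrow> b \<in> vecs n \<Longrightarrow> sd a b \<in> vecs n" unfolding vecs_def sd_def by auto
lemma sd_sd: "sd z (sd z x) = x" unfolding sd_def by auto
lemma sd_sd2: "sd (sd z x) (sd z y) = sd x y" unfolding sd_def by auto

lemma core:
  fixes n k w d :: nat and G :: "nat \<Rightarrow> nat set" and P :: "nat set pmf" and Cst \<rho> t lam :: real
  assumes sP: "set_pmf P \<subseteq> vecs n" 
    and kd: "\<And>a b. a \<in> vecs n \<Longrightarrow> b \<in> vecs n \<Longrightarrow> mat_vec k G a = mat_vec k G b \<Longrightarrow> a \<noteq> b \<Longrightarrow> d \<le> card (sd a b)"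
    and Kb: "\<And>x. x \<in> vecs n \<Longrightarrow> \<bar>\<Sum>e\<in>{e\<in>vecs n. card e = w}. chi e x\<bar> \<le> Cst * real (n choose w) * \<rho> ^ min (card x) (n - card x)"
    and \<rho>: "0 < \<rho>" "\<rho> \<le> 1" and lam: "0 < lam" "lam \<le> 1" and w: "w \<le> n" and Cst: "0 \<le> Cst"
  shows "\<exists>e\<in>{e\<in>vecs n. card e = w}. (2 * bias_lin e P)^2 \<le> Cst * (\<rho> ^ (d div 2) +
      2 * ((1/2^k) * (2^k * \<rho> powr t + 2 * (lam powr (-t) * (1+lam)^n)) +
           2 * tv_dist (vecs k) (map_pmf (mat_vec k G) P) (uniform_vec k)))"
proof -
  define V where "V = vecs n"
  define S where "S = {e\<in>vecs n. card e = w}"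
  define Q where "Q = pmf (map_pmf (mat_vec k G) P)"
  define D where "D = (\<Sum>s\<in>vecs k. \<bar>Q s - 1/2^k\<bar>)"
  define g :: "nat set \<Rightarrow> real" where "g x = \<rho> ^ min (card x) (n - card x)" for x
  define cnt where "cnt = lam powr (-t) * (1+lam)^n"
  define Bnd where "Bnd = \<rho> ^ (d div 2) + 2 * ((1/2^k) * (2^k * \<rho> powr t + 2 * cnt) + D)"
  have tv: "tv_dist (vecs k) (map_pmf (mat_vec k G) P) (uniform_vec k) = D / 2"
    unfolding tv_eq D_def Q_def by simp
  have fV: "finite V" unfolding V_def by (rule vecs_finite)
  have fS: "finite S" unfolding S_def by (simp add: vecs_finite)
  have cS: "card S = n choose w"
  proof -
    have "S = {e. e \<subseteq> {..<n} \<and> card e = w}" unfolding S_def vecs_def by auto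
    thus ?thesis by (simp add: n_subsets)
  qed
  have Spos: "card S > 0" using cS w by simp
  have P1: "(\<Sum>z\<in>V. pmf P z) = 1" unfolding V_def by (rule sum_pmf_eq_1[OF vecs_finite sP])
  have Pnn: "\<And>z. 0 \<le> pmf P z" by simp
  have g01: "\<And>x. 0 \<le> g x \<and> g x \<le> 1" unfolding g_def using \<rho> by (auto simp: power_le_one)
  have cnt1: "real (card {x\<in>V. real (card x) < t}) \<le> cnt"
    using count_lt[OF fV lam, of card t] sum_binom_pow[of lam 1 n] unfolding cnt_def V_def by (simp add: add.commute)
  have cnt2: "real (card {x\<in>V. real (n - card x) < t}) \<le> cnt"
    using count_lt[OF fV lam, of "\<lambda>x. n - card x" t] sum_binom_pow[of 1 lam n] unfolding cnt_def V_def
    by (simp add: add.commute)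
  have cnt3: "real (card {x\<in>V. real (min (card x) (n - card x)) < t}) \<le> 2 * cnt"
  proof -
    have "{x\<in>V. real (min (card x) (n - card x)) < t} \<subseteq> {x\<in>V. real (card x) < t} \<union> {x\<in>V. real (n - card x) < t}"
      by (auto simp: min_def split: if_splits)
    hence "card {x\<in>V. real (min (card x) (n - card x)) < t} \<le> card ({x\<in>V. real (card x) < t} \<union> {x\<in>V. real (n - card x) < t})"
      using fV by (intro card_mono) auto
    also have "\<dots> \<le> card {x\<in>V. real (card x) < t} + card {x\<in>V. real (n - card x) < t}" by (rule card_Un_le)
    finally show ?thesis using cnt1 cnt2 by linarith
  qed
  have perz: "(\<Sum>x\<in>V. pmf P (sd z x) * g x) \<le> Bnd" if z: "z \<in> V" for z
  proof -
    define h where "h x = mat_vec k G (sd z x)" for x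
    define B1 where "B1 = {x\<in>V. 2 * card x < d}"
    define B2 where "B2 = {x\<in>V. 2 * (n - card x) < d}"
    have hV: "h ` X \<subseteq> vecs k" for X unfolding h_def mat_vec_def vecs_def by auto
    have fle: "0 \<le> pmf P (sd z x) \<and> pmf P (sd z x) \<le> Q (h x)" for x
      unfolding Q_def h_def using pmf_le_map by auto
    have eqd: "card (sd x y) \<ge> d" if "x \<in> V" "y \<in> V" "h x = h y" "x \<noteq> y" for x y
    proof -
      have "sd z x \<noteq> sd z y" using that(4) sd_sd by metis
      thus ?thesis using kd[of "sd z x" "sd z y"] that z sd_vecs unfolding h_def V_def sd_sd2 by auto
    qed
    have inj1: "inj_on h B1"
    proof (rule inj_onI, rule ccontr)
      fix x y assume xy: "x \<in> B1" "y \<in> B1" "h x = h y" "x \<noteq> y"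
      have "card (sd x y) \<le> card x + card y" using xy vecs_elem_finite unfolding B1_def V_def
        by (intro card_sd_le) auto
      thus False using eqd[of x y] xy unfolding B1_def by auto
    qed
    have inj2: "inj_on h B2"
    proof (rule inj_onI, rule ccontr)
      fix x y assume xy: "x \<in> B2" "y \<in> B2" "h x = h y" "x \<noteq> y"
      have sub: "x \<subseteq> {..<n}" "y \<subseteq> {..<n}" using xy unfolding B2_def V_def vecs_def by auto
      have "sd x y = sd ({..<n} - x) ({..<n} - y)" using sub unfolding sd_def by auto
      hence "card (sd x y) \<le> card ({..<n} - x) + card ({..<n} - y)" using card_sd_le by auto
      also have "\<dots> = (n - card x) + (n - card y)" using sub by (simp add: card_Diff_subset finite_subset)
      finally show False using eqd[of x y] xy unfolding B2_def by auto
    qed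
    have b1: "(\<Sum>x\<in>B1. pmf P (sd z x) * g x) \<le> (1/2^k) * (2^k * \<rho> powr t + 2 * cnt) + D"
    proof -
      have "(\<Sum>x\<in>B1. pmf P (sd z x) * g x) \<le> (1/2^k) * (2^k * \<rho> powr t + card {x\<in>V. real (min (card x) (n - card x)) < t}) + D"
        unfolding D_def g_def by (rule blockbound[OF fV _ inj1 hV _ \<rho>]) (auto simp: B1_def fle)
      also have "\<dots> \<le> (1/2^k) * (2^k * \<rho> powr t + 2 * cnt) + D" using cnt3 by (simp add: divide_right_mono)
      finally show ?thesis .
    qed
    have b2: "(\<Sum>x\<in>B2. pmf P (sd z x) * g x) \<le> (1/2^k) * (2^k * \<rho> powr t + 2 * cnt) + D"
    proof -
      have "(\<Sum>x\<in>B2. pmf P (sd z x) * g x) \<le> (1/2^k) * (2^k * \<rho> powr t + card {x\<in>V. real (min (card x) (n - card x)) < t}) + D"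
        unfolding D_def g_def by (rule blockbound[OF fV _ inj2 hV _ \<rho>]) (auto simp: B2_def fle)
      also have "\<dots> \<le> (1/2^k) * (2^k * \<rho> powr t + 2 * cnt) + D" using cnt3 by (simp add: divide_right_mono)
      finally show ?thesis .
    qed
    have pw: "pmf P (sd z x) * g x \<le> (if x \<in> B1 then pmf P (sd z x) * g x else 0)
        + (if x \<in> B2 then pmf P (sd z x) * g x else 0) + pmf P (sd z x) * \<rho> ^ (d div 2)"
      if x: "x \<in> V" for x
    proof -
      have a: "0 \<le> pmf P (sd z x) * \<rho> ^ m" for m using \<rho> by simp
      have a2: "0 \<le> pmf P (sd z x) * g x" using g01 by simp
      show ?thesis
      proof (cases "x \<in> B1 \<or> x \<in> B2")
        case True
        then show ?thesis using a[of "d div 2"] a2 by auto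
      next
        case False
        hence "d div 2 \<le> min (card x) (n - card x)" using x unfolding B1_def B2_def by auto
        hence "g x \<le> \<rho> ^ (d div 2)" unfolding g_def using \<rho> by (intro power_decreasing) auto
        hence "pmf P (sd z x) * g x \<le> pmf P (sd z x) * \<rho> ^ (d div 2)" by (intro mult_left_mono) auto
        thus ?thesis using False by auto
      qed
    qed
    have "(\<Sum>x\<in>V. pmf P (sd z x) * g x) \<le> (\<Sum>x\<in>V. (if x \<in> B1 then pmf P (sd z x) * g x else 0)
        + (if x \<in> B2 then pmf P (sd z x) * g x else 0) + pmf P (sd z x) * \<rho> ^ (d div 2))"
      by (rule sum_mono) (rule pw)
    also have "\<dots> = (\<Sum>x\<in>B1. pmf P (sd z x) * g x) + (\<Sum>x\<in>B2. pmf P (sd z x) * g x)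
        + (\<Sum>x\<in>V. pmf P (sd z x)) * \<rho> ^ (d div 2)"
    proof -
      have "B1 = V \<inter> {x. x \<in> B1}" "B2 = V \<inter> {x. x \<in> B2}" unfolding B1_def B2_def by auto
      thus ?thesis using fV by (simp add: sum.distrib sum.If_cases sum_distrib_right del: Int_Collect)
    qed
    also have "(\<Sum>x\<in>V. pmf P (sd z x)) = (\<Sum>x\<in>V. pmf P x)"
      by (rule sum.reindex_bij_witness[where i = "sd z" and j = "sd z"])
        (use z in \<open>auto simp: sd_sd V_def sd_vecs\<close>)
    also have "\<dots> = 1" by (rule P1)
    finally have "(\<Sum>x\<in>V. pmf P (sd z x) * g x) \<le> (\<Sum>x\<in>B1. pmf P (sd z x) * g x) + (\<Sum>x\<in>B2. pmf P (sd z x) * g x) + \<rho> ^ (d div 2)" by simp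
    moreover define X where "X = 1 / 2 ^ k * (2 ^ k * \<rho> powr t + 2 * cnt) + D"
    ultimately show ?thesis using b1 b2 unfolding Bnd_def X_def[symmetric] by linarith
  qed
  define F where "F e = (\<Sum>z\<in>V. pmf P z * chi e z)" for e
  have F2: "F e ^ 2 = (\<Sum>z\<in>V. \<Sum>z'\<in>V. pmf P z * pmf P z' * chi e (sd z z'))" if e: "e \<in> S" for e
  proof -
    have fe: "finite e" using e vecs_elem_finite unfolding S_def by auto
    have "F e ^ 2 = (\<Sum>z\<in>V. \<Sum>z'\<in>V. (pmf P z * chi e z) * (pmf P z' * chi e z'))"
      unfolding F_def power2_eq_square sum_product ..
    also have "\<dots> = (\<Sum>z\<in>V. \<Sum>z'\<in>V. pmf P z * pmf P z' * chi e (sd z z'))"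
      by (simp add: chi_mult[OF fe, symmetric] algebra_simps)
    finally show ?thesis .
  qed
  have "(\<Sum>e\<in>S. F e ^ 2) = (\<Sum>e\<in>S. \<Sum>z\<in>V. \<Sum>z'\<in>V. pmf P z * pmf P z' * chi e (sd z z'))"
    by (rule sum.cong[OF refl]) (rule F2)
  also have "\<dots> = (\<Sum>z\<in>V. \<Sum>z'\<in>V. pmf P z * pmf P z' * (\<Sum>e\<in>S. chi e (sd z z')))"
    by (simp add: sum.swap[of _ S] sum_distrib_left)
  also have "\<dots> \<le> (\<Sum>z\<in>V. \<Sum>z'\<in>V. pmf P z * pmf P z' * (Cst * real (n choose w) * g (sd z z')))"
  proof (intro sum_mono)
    fix z z' assume "z \<in> V" "z' \<in> V"
    hence "sd z z' \<in> vecs n" unfolding V_def by (rule sd_vecs)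
    hence "(\<Sum>e\<in>S. chi e (sd z z')) \<le> Cst * real (n choose w) * g (sd z z')"
      using Kb unfolding S_def g_def by fastforce
    thus "pmf P z * pmf P z' * (\<Sum>e\<in>S. chi e (sd z z')) \<le> pmf P z * pmf P z' * (Cst * real (n choose w) * g (sd z z'))"
      by (intro mult_left_mono) auto
  qed
  also have "\<dots> = Cst * real (n choose w) * (\<Sum>z\<in>V. pmf P z * (\<Sum>z'\<in>V. pmf P z' * g (sd z z')))"
    by (simp add: sum_distrib_left algebra_simps)
  also have "(\<Sum>z\<in>V. pmf P z * (\<Sum>z'\<in>V. pmf P z' * g (sd z z'))) \<le> (\<Sum>z\<in>V. pmf P z * Bnd)"
  proof (rule sum_mono)
    fix z assume z: "z \<in> V"
    have "(\<Sum>z'\<in>V. pmf P z' * g (sd z z')) = (\<Sum>x\<in>V. pmf P (sd z x) * g x)"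
      by (rule sum.reindex_bij_witness[where i = "sd z" and j = "sd z"])
        (use z in \<open>auto simp: sd_sd V_def sd_vecs\<close>)
    also have "\<dots> \<le> Bnd" by (rule perz[OF z])
    finally show "pmf P z * (\<Sum>z'\<in>V. pmf P z' * g (sd z z')) \<le> pmf P z * Bnd" by (intro mult_left_mono) auto
  qed
  also have "(\<Sum>z\<in>V. pmf P z * Bnd) = Bnd" using P1 by (simp add: sum_distrib_right[symmetric])
  finally have tot: "(\<Sum>e\<in>S. F e ^ 2) \<le> Cst * real (n choose w) * Bnd"
    using Cst by (simp add: mult_left_mono)
  have "\<exists>e\<in>S. F e ^ 2 \<le> Cst * Bnd"
  proof (rule ccontr)
    assume "\<not> ?thesis"
    hence "\<forall>e\<in>S. Cst * Bnd < F e ^ 2" by auto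
    hence "(\<Sum>e\<in>S. Cst * Bnd) < (\<Sum>e\<in>S. F e ^ 2)" using fS Spos
      by (intro sum_strict_mono) auto
    thus False using tot cS by (simp add: mult.commute mult.left_commute)
  qed
  moreover have "\<And>e. 2 * bias_lin e P = F e" unfolding F_def V_def by (rule bias_eq[OF sP])
  ultimately show ?thesis unfolding S_def Bnd_def tv by (simp add: D_def cnt_def)
qed



lemma sq_le_abs: fixes b y :: real assumes "b^2 \<le> y^2" "0 \<le> y" shows "\<bar>b\<bar> \<le> y"
  using assms by (metis abs_le_square_iff abs_of_nonneg)

lemma fin_exp:
  fixes k :: "nat \<Rightarrow> nat" and b f :: "nat \<Rightarrow> real" and M \<gamma> :: real
  assumes k: "filterlim k at_top sequentially"
    and ev: "eventually (\<lambda>j. (b j)^2 \<le> M * (f j + \<gamma> powr real (k j))) sequentially"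
    and \<gamma>: "0 < \<gamma>" "\<gamma> < 1" and M: "0 \<le> M"
    and f: "exp_small k f"
  shows "exp_small k (\<lambda>j. \<bar>b j\<bar>)"
proof -
  obtain \<beta> where \<beta>: "\<beta> > 0" "eventually (\<lambda>j. f j \<le> 2 powr (- \<beta> * real (k j))) sequentially"
    using f unfolding exp_small_def by auto
  define \<beta>2 where "\<beta>2 = - log 2 \<gamma>"
  have \<beta>2: "\<beta>2 > 0" unfolding \<beta>2_def using \<gamma> by simp
  have geq: "\<gamma> powr x = 2 powr (- \<beta>2 * x)" for x
    unfolding \<beta>2_def using \<gamma> by (simp add: powr_powr[symmetric])
  define \<beta>3 where "\<beta>3 = min \<beta> \<beta>2"
  have \<beta>3: "\<beta>3 > 0" "\<beta>3 \<le> \<beta>" "\<beta>3 \<le> \<beta>2" using \<beta> \<beta>2 unfolding \<beta>3_def by auto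
  have lim: "filterlim (\<lambda>j. 2 powr (\<beta>3 / 2 * real (k j))) at_top sequentially"
  proof -
    have "filterlim (\<lambda>x::real. 2 powr (\<beta>3 / 2 * x)) at_top at_top" using \<beta>3 by real_asymp
    moreover have "filterlim (\<lambda>j. real (k j)) at_top sequentially"
      using k filterlim_compose filterlim_real_sequentially by blast
    ultimately show ?thesis by (rule filterlim_compose)
  qed
  have ev2: "eventually (\<lambda>j. 2 * M + 1 \<le> 2 powr (\<beta>3 / 2 * real (k j))) sequentially"
    using lim by (simp add: filterlim_at_top)
  have "eventually (\<lambda>j. \<bar>b j\<bar> \<le> 2 powr (- (\<beta>3/4) * real (k j))) sequentially"
    using ev \<beta>(2) ev2
  proof eventually_elim
    case (elim j)
    let ?K = "real (k j)"
    have "- \<beta> * ?K \<le> - \<beta>3 * ?K" using \<beta>3 by (intro mult_right_mono) auto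
    hence "2 powr (- \<beta> * ?K) \<le> 2 powr (- \<beta>3 * ?K)" by (intro powr_mono) auto
    hence a: "f j \<le> 2 powr (- \<beta>3 * ?K)" using elim(2) by linarith
    have b: "\<gamma> powr ?K \<le> 2 powr (- \<beta>3 * ?K)" unfolding geq using \<beta>3 by (intro powr_mono) (auto intro: mult_right_mono)
    have "M * (f j + \<gamma> powr ?K) \<le> M * (2 * 2 powr (- \<beta>3 * ?K))" using a b M
      by (intro mult_left_mono) auto
    hence "(b j)^2 \<le> M * (2 * 2 powr (- \<beta>3 * ?K))" using elim(1) by linarith
    also have "\<dots> \<le> (2 * M + 1) * 2 powr (- \<beta>3 * ?K)" by (simp add: algebra_simps)
    also have "\<dots> \<le> 2 powr (\<beta>3 / 2 * ?K) * 2 powr (- \<beta>3 * ?K)" using elim(3) by (intro mult_right_mono) auto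
    also have "\<dots> = (2 powr (- (\<beta>3/4) * ?K))^2"
      by (simp add: powr_add[symmetric] powr_power)
    finally show ?case by (rule sq_le_abs) simp
  qed
  thus ?thesis unfolding exp_small_def using \<beta>3 by (intro exI[of _ "\<beta>3/4"]) auto
qed

lemma fin_negl:
  fixes k :: "nat \<Rightarrow> nat" and b f :: "nat \<Rightarrow> real" and M \<gamma> :: real
  assumes k: "filterlim k at_top sequentially"
    and ev: "eventually (\<lambda>j. (b j)^2 \<le> M * (f j + \<gamma> powr real (k j))) sequentially"
    and \<gamma>: "0 < \<gamma>" "\<gamma> < 1" and M: "0 \<le> M"
    and f: "negl k f"
  shows "negl k (\<lambda>j. \<bar>b j\<bar>)"
  unfolding negl_def
proof (intro allI impI)
  fix a :: real assume a: "a > 0"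
  have kr: "filterlim (\<lambda>j. real (k j)) at_top sequentially"
    using k filterlim_compose filterlim_real_sequentially by blast
  have fo: "f \<in> o(\<lambda>j. real (k j) powr (-(2*a)))" using f a unfolding negl_def by auto
  have go: "(\<lambda>j. \<gamma> powr real (k j)) \<in> o(\<lambda>j. real (k j) powr (-(2*a)))"
  proof -
    have "(\<lambda>x::real. \<gamma> powr x) \<in> o(\<lambda>x. x powr (-(2*a)))" using \<gamma> a by real_asymp
    from landau_o.small.compose[OF this kr] show ?thesis .
  qed
  show "(\<lambda>j. \<bar>b j\<bar>) \<in> o(\<lambda>j. real (k j) powr - a)"
  proof (rule landau_o.smallI)
    fix c :: real assume c: "c > 0"
    define \<epsilon> where "\<epsilon> = c^2 / (2 * M + 2)"
    have \<epsilon>: "\<epsilon> > 0" "M * (2 * \<epsilon>) \<le> c^2" unfolding \<epsilon>_def using M c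
      by (auto simp: field_simps)
    have kpos: "eventually (\<lambda>j. real (k j) > 0) sequentially" using kr unfolding filterlim_at_top_dense by blast
    show "eventually (\<lambda>j. norm \<bar>b j\<bar> \<le> c * norm (real (k j) powr - a)) sequentially"
      using landau_o.smallD[OF fo \<epsilon>(1)] landau_o.smallD[OF go \<epsilon>(1)] ev kpos
    proof eventually_elim
      case (elim j)
      let ?K = "real (k j)"
      have p: "?K powr (-(2*a)) = (?K powr - a)^2" using elim(4) by (simp add: powr_power)
      have f1: "f j \<le> \<epsilon> * ?K powr (-(2*a))" using elim(1) by simp
      have g1: "\<gamma> powr ?K \<le> \<epsilon> * ?K powr (-(2*a))" using elim(2) by simp
      have "M * (f j + \<gamma> powr ?K) \<le> M * (\<epsilon> * ?K powr (-(2*a)) + \<epsilon> * ?K powr (-(2*a)))"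
        using f1 g1 M by (intro mult_left_mono) auto
      hence "(b j)^2 \<le> M * (\<epsilon> * ?K powr (-(2*a)) + \<epsilon> * ?K powr (-(2*a)))" using elim(3) by linarith
      also have "\<dots> = (M * (2 * \<epsilon>)) * ?K powr (-(2*a))" by (simp add: algebra_simps)
      also have "\<dots> \<le> c^2 * ?K powr (-(2*a))" using \<epsilon> by (intro mult_right_mono) auto
      also have "\<dots> = (c * ?K powr - a)^2" unfolding p by (simp add: power_mult_distrib)
      finally have "\<bar>b j\<bar> \<le> c * ?K powr - a" by (rule sq_le_abs) (use c in simp)
      thus ?case by simp
    qed
  qed
qed



lemma c_half:
  fixes c Cst :: real
  assumes c: "0 < c" and Cst: "Cst \<ge> 1"
    and kraw: "\<And>N w i. N \<ge> 1 \<Longrightarrow> real w \<le> c * real N \<Longrightarrow> real i \<le> real N / 2 \<Longrightarrow>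
        \<bar>real_of_int (krawtchouk N w i)\<bar> \<le> Cst * real (N choose w) * (1 - 2 * real w / real N) ^ i"
  shows "c \<le> 1/2"
proof (rule ccontr)
  assume "\<not> c \<le> 1/2"
  hence c2: "c > 1/2" by simp
  define N where "N = nat \<lceil>1 / (c - 1/2)\<rceil> + 2"
  define w where "w = N div 2 + 1"
  have N2: "N \<ge> 2" unfolding N_def by simp
  have "real N \<ge> 1 / (c - 1/2)" unfolding N_def by linarith
  hence cN: "(c - 1/2) * real N \<ge> 1" using c2 by (simp add: field_simps)
  have "real w \<le> real N / 2 + 1" unfolding w_def by linarith
  hence wc: "real w \<le> c * real N" using cN by (simp add: algebra_simps)
  have wN: "w \<le> N" unfolding w_def using N2 by linarith
  have "N < 2 * w" unfolding w_def by presburger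
  hence w2: "real N < 2 * real w" by linarith
  have i: "real (1::nat) \<le> real N / 2" using N2 by simp
  have N1: "N \<ge> 1" using N2 by simp
  have bpos: "real (N choose w) > 0" using wN by simp
  have neg: "1 - 2 * real w / real N < 0" using w2 N2 by (simp add: field_simps)
  have "Cst * real (N choose w) * (1 - 2 * real w / real N) ^ 1 < 0"
    using Cst bpos neg by (simp add: mult_pos_neg)
  moreover have "\<bar>real_of_int (krawtchouk N w 1)\<bar> \<le> Cst * real (N choose w) * (1 - 2 * real w / real N) ^ 1"
    using kraw[OF N1 wc i] .
  ultimately show False by simp
qed


theorem mainTheorem6:
  fixes c Cst R \<omega> \<delta> :: real
    and n k :: "nat \<Rightarrow> nat"
    and G :: "nat \<Rightarrow> nat \<Rightarrow> nat set"
    and Z :: "nat \<Rightarrow> nat set pmf"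
  assumes c: "0 < c" "c < 1" and Cst: "Cst \<ge> 1"
    and kraw: "\<And>N w i. N \<ge> 1 \<Longrightarrow> real w \<le> c * real N \<Longrightarrow> real i \<le> real N / 2 \<Longrightarrow>
        \<bar>real_of_int (krawtchouk N w i)\<bar> \<le> Cst * real (N choose w) * (1 - 2 * real w / real N) ^ i"
    and R: "0 < R" "R < 1"
    and \<omega>: "0 < \<omega>" "\<omega> < c"
    and \<delta>: "\<delta> > 0"
    and gen: "\<And>j. is_gen_matrix (n j) (k j) (G j)"
    and n_inf: "filterlim n at_top sequentially"
    and rate: "(\<lambda>j. real (k j) / real (n j)) \<longlonglongrightarrow> R"
    and dual: "(\<lambda>j. real (min_dist (dual_code (n j) (lin_code (n j) (k j) (G j)))) / real (n j)) \<longlonglongrightarrow> \<delta>"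
    and Z: "\<And>j. set_pmf (Z j) \<subseteq> vecs (n j)"
  shows "\<exists>e :: nat \<Rightarrow> nat set.
           (\<forall>j. e j \<in> vecs (n j)) \<and>
           (\<lambda>j. real (card (e j)) / real (n j)) \<longlonglongrightarrow> \<omega> \<and>
           (negl k (\<lambda>j. tv_dist (vecs (k j)) (map_pmf (mat_vec (k j) (G j)) (Z j)) (uniform_vec (k j)))
              \<longrightarrow> negl k (\<lambda>j. \<bar>bias_lin (e j) (Z j)\<bar>)) \<and>
           (exp_small k (\<lambda>j. tv_dist (vecs (k j)) (map_pmf (mat_vec (k j) (G j)) (Z j)) (uniform_vec (k j)))
              \<longrightarrow> exp_small k (\<lambda>j. \<bar>bias_lin (e j) (Z j)\<bar>))"
  proof -
  define tv where "tv j = tv_dist (vecs (k j)) (map_pmf (mat_vec (k j) (G j)) (Z j)) (uniform_vec (k j))" for j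
  define d where "d j = min_dist (dual_code (n j) (lin_code (n j) (k j) (G j)))" for j
  have chalf: "c \<le> 1/2" by (rule c_half[OF c(1) Cst kraw])
  define \<rho>0 where "\<rho>0 = 1 - 2 * \<omega>"
  define \<rho>1 where "\<rho>1 = (1 + \<rho>0) / 2"
  have \<rho>0: "0 < \<rho>0" "\<rho>0 < 1" using \<omega> chalf unfolding \<rho>0_def by auto
  have \<rho>1: "\<rho>0 < \<rho>1" "0 < \<rho>1" "\<rho>1 < 1" using \<rho>0 unfolding \<rho>1_def by auto
  define w where "w j = nat \<lfloor>\<omega> * real (n j)\<rfloor>" for j
  have wle: "real (w j) \<le> \<omega> * real (n j)" for j unfolding w_def using \<omega> by simp
  have wgt: "\<omega> * real (n j) - 1 < real (w j)" for j unfolding w_def using \<omega> by linarith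
  have wc: "real (w j) \<le> c * real (n j)" for j
  proof -
    have "\<omega> * real (n j) \<le> c * real (n j)" using \<omega> by (intro mult_right_mono) auto
    thus ?thesis using wle[of j] by linarith
  qed
  have wn: "w j \<le> n j" for j
  proof -
    have "c * real (n j) \<le> 1 * real (n j)" using c by (intro mult_right_mono) auto
    thus ?thesis using wc[of j] by simp
  qed
  have nr: "filterlim (\<lambda>j. real (n j)) at_top sequentially"
    using n_inf filterlim_compose filterlim_real_sequentially by blast
  have n1: "eventually (\<lambda>j. n j \<ge> 1) sequentially" using n_inf by (simp add: filterlim_at_top)
  have wlim: "(\<lambda>j. real (w j) / real (n j)) \<longlonglongrightarrow> \<omega>"
  proof (rule tendsto_sandwich[of "\<lambda>j. \<omega> - 1 / real (n j)" _ _ "\<lambda>_. \<omega>"])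
    show "eventually (\<lambda>j. \<omega> - 1 / real (n j) \<le> real (w j) / real (n j)) sequentially"
      using n1 proof eventually_elim
      case (elim j)
      hence np: "real (n j) > 0" by simp
      have "(\<omega> * real (n j) - 1) / real (n j) \<le> real (w j) / real (n j)"
        using wgt[of j] np by (intro divide_right_mono) auto
      thus ?case using np by (simp add: diff_divide_distrib)
    qed
    show "eventually (\<lambda>j. real (w j) / real (n j) \<le> \<omega>) sequentially"
      using n1 proof eventually_elim
      case (elim j) thus ?case using wle[of j] by (simp add: field_simps)
    qed
    have "(\<lambda>j. 1 / real (n j)) \<longlonglongrightarrow> 0" using tendsto_inverse_0_at_top[OF nr] by (simp add: inverse_eq_divide)
    thus "(\<lambda>j. \<omega> - 1 / real (n j)) \<longlonglongrightarrow> \<omega>" using tendsto_diff[OF tendsto_const, of _ 0 sequentially \<omega>] by simp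
  qed simp
  define \<rho> where "\<rho> j = 1 - 2 * real (w j) / real (n j)" for j
  have \<rho>lim: "\<rho> \<longlonglongrightarrow> \<rho>0"
  proof -
    have "(\<lambda>j. 1 - 2 * (real (w j) / real (n j))) \<longlonglongrightarrow> 1 - 2 * \<omega>"
      by (intro tendsto_diff tendsto_mult tendsto_const wlim)
    moreover have "\<rho> = (\<lambda>j. 1 - 2 * (real (w j) / real (n j)))" unfolding \<rho>_def by auto
    ultimately show ?thesis unfolding \<rho>0_def by simp
  qed
  have \<rho>le1: "\<rho> j \<le> 1" for j unfolding \<rho>_def by simp
  have \<rho>ev: "eventually (\<lambda>j. 0 < \<rho> j \<and> \<rho> j \<le> \<rho>1) sequentially"
    using order_tendstoD(1)[OF \<rho>lim \<rho>0(1)] order_tendstoD(2)[OF \<rho>lim \<rho>1(1)]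
    by eventually_elim auto

  define S where "S j = {e\<in>vecs (n j). card e = w j}" for j
  have Sne: "{..<w j} \<in> S j" for j unfolding S_def vecs_def using wn[of j] by auto
  have fS: "finite (S j)" for j unfolding S_def by (simp add: vecs_finite)
  have "\<forall>j. \<exists>e. e \<in> S j \<and> (\<forall>e'\<in>S j. \<bar>bias_lin e (Z j)\<bar> \<le> \<bar>bias_lin e' (Z j)\<bar>)"
  proof
    fix j
    let ?f = "\<lambda>e. \<bar>bias_lin e (Z j)\<bar>"
    have ne: "S j \<noteq> {}" using Sne[of j] by auto
    show "\<exists>e. e \<in> S j \<and> (\<forall>e'\<in>S j. ?f e \<le> ?f e')"
      using arg_min_if_finite[OF fS ne, of ?f] by (intro exI[of _ "arg_min_on ?f (S j)"]) (auto simp: not_less)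
  qed
  then obtain e where e: "\<And>j. e j \<in> S j" "\<And>j e'. e' \<in> S j \<Longrightarrow> \<bar>bias_lin (e j) (Z j)\<bar> \<le> \<bar>bias_lin e' (Z j)\<bar>"
    by metis
  have evecs: "\<forall>j. e j \<in> vecs (n j)" using e(1) unfolding S_def by auto
  have elim: "(\<lambda>j. real (card (e j)) / real (n j)) \<longlonglongrightarrow> \<omega>"
  proof -
    have "(\<lambda>j. real (card (e j)) / real (n j)) = (\<lambda>j. real (w j) / real (n j))"
      using e(1) unfolding S_def by auto
    thus ?thesis using wlim by simp
  qed
  define lam where "lam = 2 powr (R/4) - 1"
  have lam: "0 < lam" "lam < 1"
  proof -
    have "2 powr 0 < 2 powr (R/4)" using R by (intro powr_less_mono) auto
    moreover have "2 powr (R/4) < 2 powr 1" using R by (intro powr_less_mono) auto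
    ultimately show "0 < lam" "lam < 1" unfolding lam_def by auto
  qed
  define \<epsilon> where "\<epsilon> = (R/4) * ln 2 / (- ln lam)"
  have \<epsilon>: "\<epsilon> > 0"
  proof -
    have "ln lam < 0" using lam by simp
    moreover have "R/4 * ln 2 > 0" using R by simp
    ultimately show ?thesis unfolding \<epsilon>_def by (intro divide_pos_pos) auto
  qed
  have lam_eps: "lam powr (-\<epsilon>) = 2 powr (R/4)"
  proof -
    have "lam powr (-\<epsilon>) = exp (-\<epsilon> * ln lam)" using lam by (simp add: powr_def)
    also have "-\<epsilon> * ln lam = (R/4) * ln 2" unfolding \<epsilon>_def using lam by (simp add: field_simps)
    also have "exp \<dots> = 2 powr (R/4)" by (simp add: powr_def)
    finally show ?thesis .
  qed
  define q1 where "q1 = \<rho>1 powr (\<delta>/4)"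
  define q2 where "q2 = \<rho>1 powr \<epsilon>"
  define q3 where "q3 = 2 powr (-R/4)"
  have q1: "0 < q1" "q1 < 1" unfolding q1_def using \<rho>1 \<delta> powr_less_mono2[of "\<delta>/4" \<rho>1 1] by auto
  have q2: "0 < q2" "q2 < 1" unfolding q2_def using \<rho>1 \<epsilon> powr_less_mono2[of \<epsilon> \<rho>1 1] by auto
  have q3: "0 < q3" "q3 < 1" unfolding q3_def using R by (auto simp: powr_less_one)
  define \<gamma> where "\<gamma> = max q1 (max q2 q3)"
  have \<gamma>: "0 < \<gamma>" "\<gamma> < 1" "q1 \<le> \<gamma>" "q2 \<le> \<gamma>" "q3 \<le> \<gamma>" unfolding \<gamma>_def using q1 q2 q3 by auto
  define A where "A = 1 / \<rho>1 + 6"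
  have A: "A > 0" unfolding A_def using \<rho>1 by (simp add: add_pos_pos)
  define M where "M = Cst * (A + 4) / 4"
  have M: "M \<ge> 0" unfolding M_def using Cst A by simp
  have dev: "eventually (\<lambda>j. real (d j) \<ge> \<delta>/2 * real (n j)) sequentially"
  proof -
    have "eventually (\<lambda>j. \<delta>/2 < real (d j) / real (n j)) sequentially"
    proof -
      have "\<delta>/2 < \<delta>" using \<delta> by simp
      from order_tendstoD(1)[OF dual this] show ?thesis unfolding d_def .
    qed
    thus ?thesis using n1
    proof eventually_elim
      case (elim j) thus ?case by (simp add: field_simps)
    qed
  qed
  have kev: "eventually (\<lambda>j. real (k j) \<ge> 3*R/4 * real (n j) \<and> k j \<le> n j) sequentially"
  proof -
    have "eventually (\<lambda>j. 3*R/4 < real (k j) / real (n j)) sequentially"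
    proof -
      have "3*R/4 < R" using R by simp
      from order_tendstoD(1)[OF rate this] show ?thesis .
    qed
    moreover have "eventually (\<lambda>j. real (k j) / real (n j) < 1) sequentially"
      using order_tendstoD(2)[OF rate R(2)] .
    ultimately show ?thesis using n1
    proof eventually_elim
      case (elim j)
      hence np: "real (n j) > 0" by simp
      have "real (k j) < real (n j)" using elim(2) np by (simp add: field_simps)
      thus ?case using elim(1) np by (simp add: field_simps)
    qed
  qed
  have k_inf: "filterlim k at_top sequentially"
    unfolding filterlim_at_top
  proof
    fix Z0 :: nat
    have "eventually (\<lambda>j. real (n j) \<ge> 4 * real Z0 / (3*R)) sequentially"
      using nr by (simp add: filterlim_at_top)
    thus "eventually (\<lambda>j. Z0 \<le> k j) sequentially" using kev
    proof eventually_elim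
      case (elim j)
      have "3*R/4 * (4 * real Z0 / (3*R)) \<le> 3*R/4 * real (n j)" using elim(1) R by (intro mult_left_mono) auto
      hence "real Z0 \<le> real (k j)" using elim(2) R by simp
      thus ?case by simp
    qed
  qed
  have bound: "eventually (\<lambda>j. (bias_lin (e j) (Z j))^2 \<le> M * (tv j + \<gamma> powr real (k j))) sequentially"
    using n1 \<rho>ev dev kev
  proof eventually_elim
    case (elim j)
    define N where "N = n j"
    define K where "K = k j"
    define t where "t = \<epsilon> * real N"
    have N1: "N \<ge> 1" and \<rho>j: "0 < \<rho> j" "\<rho> j \<le> \<rho>1" and dj: "real (d j) \<ge> \<delta>/2 * real N"
      and Kj: "real K \<ge> 3*R/4 * real N" "K \<le> N"
      using elim unfolding N_def K_def by auto
    have rows: "\<forall>r<K. G j r \<in> vecs N" using gen[of j] unfolding is_gen_matrix_def N_def K_def by auto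
    have kd: "\<And>a b. a \<in> vecs N \<Longrightarrow> b \<in> vecs N \<Longrightarrow> mat_vec K (G j) a = mat_vec K (G j) b \<Longrightarrow> a \<noteq> b \<Longrightarrow> d j \<le> card (sd a b)"
      unfolding d_def N_def K_def by (rule ker_dist) (use rows in \<open>auto simp: N_def K_def\<close>)
    have Kb: "\<And>x. x \<in> vecs N \<Longrightarrow> \<bar>\<Sum>e\<in>{e\<in>vecs N. card e = w j}. chi e x\<bar> \<le> Cst * real (N choose w j) * \<rho> j ^ min (card x) (N - card x)"
      unfolding \<rho>_def N_def by (rule Kbound[OF kraw]) (use N1 wc in \<open>auto simp: N_def\<close>)
    obtain e' where e': "e' \<in> {e\<in>vecs N. card e = w j}"
      and ineq: "(2 * bias_lin e' (Z j))^2 \<le> Cst * (\<rho> j ^ (d j div 2) +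
      2 * ((1/2^K) * (2^K * \<rho> j powr t + 2 * (lam powr (-t) * (1+lam)^N)) +
           2 * tv_dist (vecs K) (map_pmf (mat_vec K (G j)) (Z j)) (uniform_vec K)))"
      using core[where t=t, OF Z[of j, folded N_def] kd Kb \<rho>j(1) \<rho>le1 lam(1) _ wn[of j, folded N_def]] lam Cst
      by auto
    have tvj: "tv_dist (vecs K) (map_pmf (mat_vec K (G j)) (Z j)) (uniform_vec K) = tv j" unfolding tv_def K_def ..
    have be: "(bias_lin (e j) (Z j))^2 \<le> (bias_lin e' (Z j))^2"
    proof -
      have "\<bar>bias_lin (e j) (Z j)\<bar> \<le> \<bar>bias_lin e' (Z j)\<bar>" using e(2)[of e' j] e' unfolding S_def N_def by auto
      hence "\<bar>bias_lin (e j) (Z j)\<bar>^2 \<le> \<bar>bias_lin e' (Z j)\<bar>^2" by (intro power_mono) auto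
      thus ?thesis by simp
    qed
    have T1: "\<rho> j ^ (d j div 2) \<le> (1/\<rho>1) * \<gamma> powr real K"
    proof -
      let ?dd = "d j div 2"
      have "\<rho> j ^ ?dd \<le> \<rho>1 ^ ?dd" using \<rho>j by (intro power_mono) auto
      also have "\<dots> = \<rho>1 powr real ?dd" using \<rho>1 by (simp add: powr_realpow)
      also have "\<dots> \<le> \<rho>1 powr (\<delta>/4 * real N - 1)"
      proof (rule powr_mono')
        have "real (d j) \<le> 2 * real ?dd + 1" by linarith
        thus "\<delta>/4 * real N - 1 \<le> real ?dd" using dj by linarith
      qed (use \<rho>1 in auto)
      also have "\<dots> = (1/\<rho>1) * q1 powr real N" unfolding q1_def using \<rho>1
        by (simp add: powr_diff powr_powr mult.commute)
      also have "\<dots> \<le> (1/\<rho>1) * \<gamma> powr real K"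
      proof (rule mult_left_mono)
        have "q1 powr real N \<le> q1 powr real K" using q1 Kj(2) by (intro powr_mono') auto
        also have "\<dots> \<le> \<gamma> powr real K" using q1 \<gamma> by (intro powr_mono2) auto
        finally show "q1 powr real N \<le> \<gamma> powr real K" .
      qed (use \<rho>1 in auto)
      finally show ?thesis .
    qed
    have T2: "\<rho> j powr t \<le> \<gamma> powr real K"
    proof -
      have "\<rho> j powr t \<le> \<rho>1 powr t" using \<rho>j \<epsilon> unfolding t_def by (intro powr_mono2) auto
      also have "\<dots> = q2 powr real N" unfolding q2_def t_def by (simp add: powr_powr)
      also have "\<dots> \<le> q2 powr real K" using q2 Kj(2) by (intro powr_mono') auto
      also have "\<dots> \<le> \<gamma> powr real K" using q2 \<gamma> by (intro powr_mono2) auto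
      finally show ?thesis .
    qed
    have T3: "(lam powr (-t) * (1+lam)^N) / 2^K \<le> \<gamma> powr real K"
    proof -
      have a: "lam powr (-t) = 2 powr (R/4 * real N)"
      proof -
        have "lam powr (-t) = (lam powr (-\<epsilon>)) powr real N" unfolding t_def by (simp add: powr_powr)
        thus ?thesis unfolding lam_eps by (simp add: powr_powr)
      qed
      have b: "(1+lam)^N = 2 powr (R/4 * real N)"
      proof -
        have "(1+lam)^N = (2 powr (R/4))^N" unfolding lam_def by simp
        thus ?thesis by (simp add: powr_power mult.commute)
      qed
      have c: "(2::real)^K = 2 powr real K" by (simp add: powr_realpow)
      have "(lam powr (-t) * (1+lam)^N) / 2^K = 2 powr (R/4 * real N + R/4 * real N - real K)"
        unfolding a b c by (simp only: powr_diff powr_add)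
      also have "\<dots> \<le> 2 powr (- R/4 * real K)"
      proof (rule powr_mono)
        have "R * real K \<le> R * real N" using R Kj(2) by (intro mult_left_mono) auto
        thus "R/4 * real N + R/4 * real N - real K \<le> - R/4 * real K" using Kj(1) by linarith
      qed simp
      also have "\<dots> = q3 powr real K" unfolding q3_def by (simp add: powr_powr)
      also have "\<dots> \<le> \<gamma> powr real K" using q3 \<gamma> by (intro powr_mono2) auto
      finally show ?thesis .
    qed
    have "(2 * bias_lin (e j) (Z j))^2 \<le> (2 * bias_lin e' (Z j))^2" using be by simp
    also have "\<dots> \<le> Cst * (\<rho> j ^ (d j div 2) + 2 * \<rho> j powr t + 4 * ((lam powr (-t) * (1+lam)^N) / 2^K) + 4 * tv j)"
      using ineq unfolding tvj by (simp add: field_simps)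
    also have "\<dots> \<le> Cst * ((1/\<rho>1) * \<gamma> powr real K + 2 * \<gamma> powr real K + 4 * \<gamma> powr real K + 4 * tv j)"
      using T1 T2 T3 Cst by (intro mult_left_mono) auto
    also have "\<dots> = Cst * (A * \<gamma> powr real K + 4 * tv j)" unfolding A_def by (simp add: algebra_simps)
    also have "\<dots> \<le> Cst * ((A + 4) * (tv j + \<gamma> powr real K))"
    proof (rule mult_left_mono)
      have "0 \<le> tv j" unfolding tv_def tv_dist_def by (simp add: sum_nonneg)
      moreover have "0 \<le> \<gamma> powr real K" by simp
      ultimately show "A * \<gamma> powr real K + 4 * tv j \<le> (A + 4) * (tv j + \<gamma> powr real K)"
        using A by (simp add: algebra_simps)
    qed (use Cst in auto)
    finally show ?case unfolding M_def K_def by (simp add: power_mult_distrib)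
  qed
  have tvnn: "tv j \<ge> 0" for j unfolding tv_def tv_dist_def by (simp add: sum_nonneg)
  show ?thesis
  proof (intro exI[of _ e] conjI impI evecs elim)
    assume "negl k (\<lambda>j. tv_dist (vecs (k j)) (map_pmf (mat_vec (k j) (G j)) (Z j)) (uniform_vec (k j)))"
    thus "negl k (\<lambda>j. \<bar>bias_lin (e j) (Z j)\<bar>)" using fin_negl[OF k_inf bound \<gamma>(1,2) M] unfolding tv_def by simp
  next
    assume "exp_small k (\<lambda>j. tv_dist (vecs (k j)) (map_pmf (mat_vec (k j) (G j)) (Z j)) (uniform_vec (k j)))"
    thus "exp_small k (\<lambda>j. \<bar>bias_lin (e j) (Z j)\<bar>)" using fin_exp[OF k_inf bound \<gamma>(1,2) M] unfolding tv_def by simp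
  qed
qed

end
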